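(* ($q$-Genocchi triangle) Let $q$ be a nonzero real number with $q\neq-1$. Define numbers $b(m,k)=b(m,k,q)$ as follows: $b(0,1)=1$; $b(2n+1,0)=0$ for all $n\ge0$; $b(2n,n+1)=0$ for all $n\ge1$; for $n\ge0$ and $1\le k\le n+1$, $$b(2n+1,k)=q^{2k-2}b(2n+1,k-1)+(1+q^{2k-1})b(2n,k);$$ and for $n\ge1$ and $1\le k\le n$, $$b(2n,k)=q^{1-2k}\big(b(2n,k+1)+(1+q^{2k})b(2n-1,k)\big).$$ (In particular $b(1,1)=1+q$.) Then for every $n\ge1$, $$b(2n-1,n)=\lambda\big((-1)^{n-1}U_{2n-1}(1,s,q)\big)=(-q;q)_{2n-1}\,G_{2n}(q).$$
   Context: $U_{-1}=0$, $U_0=1$, $U_n(x,s,q)=(1+q^{n})x\,U_{n-1}(x,s,q)+q^{n-1}s\,U_{n-2}(x,s,q)$ for $n\ge1$. Since $U_{2n}(1,s,q)$ is a polynomial in $s$ of degree $n$, the polynomials $U_{2n}(1,s,q)$, $n\ge0$, form a basis of the polynomials in $s$; $\lambda$ is the linear functional on polynomials in $s$ with $\lambda(U_{2n}(1,s,q))=[n=0]$. Notation: $[m]=1+q+\cdots+q^{m-1}$, $[m]!=[1]\cdots[m]$; $(-q;q)_m=(1+q)(1+q^2)\cdots(1+q^m)$. With $e(z)=\sum_{m\ge0}z^m/[m]!$, the $q$-Genocchi numbers $G_{2m}(q)$, $m\ge1$, are defined by $z\frac{e(z)-e(-z)}{e(z)+e(-z)}=\sum_{m\ge1}\frac{(-1)^{m-1}G_{2m}(q)(-q;q)_{2m-1}}{[2m]!}z^{2m}$.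 *)

theory Defs
  imports "HOL-Computational_Algebra.Polynomial" "HOL-Computational_Algebra.Formal_Power_Series"
begin

text \<open>U_n(x,s,q) as a polynomial in s (real coefficients), for given reals q and x.
  Index shift: Upol q x n = U_n, with U_{-1} = 0 built into the case n = 1.\<close>
fun Upol :: "real \<Rightarrow> real \<Rightarrow> nat \<Rightarrow> real poly" where
  "Upol q x 0 = 1"
| "Upol q x (Suc 0) = smult ((1 + q) * x) 1"
| "Upol q x (Suc (Suc n)) =
     smult ((1 + q ^ (n + 2)) * x) (Upol q x (Suc n)) + smult (q ^ (n + 1)) ([:0, 1:] * Upol q x n)"

definition qlambda :: "real \<Rightarrow> real poly \<Rightarrow> real" where
  "qlambda q = (SOME L. (\<forall>p r. L (p + r) = L p + L r) \<and> (\<forall>c p. L (smult c p) = c * L p)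
                 \<and> (\<forall>n. L (Upol q 1 (2 * n)) = (if n = 0 then 1 else 0)))"

definition qint :: "real \<Rightarrow> nat \<Rightarrow> real" where
  "qint q m = (\<Sum>i<m. q ^ i)"

definition qfact :: "real \<Rightarrow> nat \<Rightarrow> real" where
  "qfact q m = (\<Prod>i=1..m. qint q i)"

definition qpoch_neg :: "real \<Rightarrow> nat \<Rightarrow> real" where
  "qpoch_neg q m = (\<Prod>i=1..m. 1 + q ^ i)"

definition qexp :: "real \<Rightarrow> real fps" where
  "qexp q = Abs_fps (\<lambda>m. 1 / qfact q m)"

definition qexp_neg :: "real \<Rightarrow> real fps" where
  "qexp_neg q = Abs_fps (\<lambda>m. (-1) ^ m / qfact q m)"

text \<open>q-Genocchi numbers: from z (e(z)-e(-z))/(e(z)+e(-z)) = sum_{m>=1} (-1)^(m-1) G_{2m}(q) (-q;q)_{2m-1} z^{2m} / [2m]!.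
  qGenocchi q m stands for G_{2m}(q).\<close>
definition qGenocchi :: "real \<Rightarrow> nat \<Rightarrow> real" where
  "qGenocchi q m =
     (-1) ^ (m - 1) * qfact q (2 * m) / qpoch_neg q (2 * m - 1)
     * fps_nth (fps_X * (qexp q - qexp_neg q) * inverse (qexp q + qexp_neg q)) (2 * m)"

end

theory Submission
  imports Defs
begin

unbundle fps_syntax


lemma qint_Suc: "qint q (Suc n) = qint q n + q ^ n"
  by (simp add: qint_def)

lemma qint_geo: "(q - 1) * qint q n = q ^ n - 1"
  by (induction n) (auto simp: qint_def algebra_simps)

lemma pow_eq_pm1:
  fixes q :: real
  assumes "q ^ n = 1 \<or> q ^ n = -1" "n \<ge> 1"
  shows "\<bar>q\<bar> = 1"
proof -
  have "\<bar>q ^ n\<bar> = 1" using assms(1) by auto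
  hence "\<bar>q\<bar> ^ n = 1 ^ n" by (simp add: power_abs)
  thus ?thesis using assms(2) power_eq_imp_eq_base[of "\<bar>q\<bar>" n 1] by simp
qed

lemma qint_nz:
  fixes q :: real
  assumes "q \<noteq> -1" "n \<ge> 1"
  shows "qint q n \<noteq> 0"
proof
  assume h: "qint q n = 0"
  show False
  proof (cases "q = 1")
    case True
    then show ?thesis using h assms by (simp add: qint_def)
  next
    case False
    have "q ^ n = 1" using qint_geo[of q n] h by simp
    hence "\<bar>q\<bar> = 1" using pow_eq_pm1 assms by blast
    thus False using False assms(1) by (simp add: abs_if split: if_splits)
  qed
qed

lemma qfact_Suc: "qfact q (Suc n) = qfact q n * qint q (Suc n)"
  by (simp add: qfact_def prod.nat_ivl_Suc' mult.commute)

lemma qfact_nz: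
  fixes q :: real
  assumes "q \<noteq> -1"
  shows "qfact q n \<noteq> 0"
proof (induction n)
  case 0 then show ?case by (simp add: qfact_def)
next
  case (Suc n) then show ?case using qint_nz[OF assms, of "Suc n"] by (simp add: qfact_Suc)
qed

lemma qpoch_nz:
  fixes q :: real
  assumes "q \<noteq> -1"
  shows "qpoch_neg q n \<noteq> 0"
proof
  assume "qpoch_neg q n = 0"
  then obtain i where i: "1 \<le> i" "i \<le> n" "1 + q ^ i = 0"
    unfolding qpoch_neg_def by (auto simp: prod_zero_iff)
  hence "q ^ i = -1" by simp
  hence "\<bar>q\<bar> = 1" using pow_eq_pm1 i by blast
  hence "q = 1 \<or> q = -1" by (auto simp: abs_if split: if_splits)
  thus False using assms \<open>q ^ i = -1\<close> by auto
qed

lemma Upol_deg: "degree (Upol q x n) \<le> n div 2"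
proof (induction q x n rule: Upol.induct)
  case (3 q x n)
  have a: "degree (smult ((1 + q ^ (n + 2)) * x) (Upol q x (Suc n))) \<le> Suc (Suc n) div 2"
  proof -
    have "degree (Upol q x (Suc n)) \<le> Suc (Suc n) div 2" using 3(1) by linarith
    thus ?thesis using degree_smult_le[of "(1 + q ^ (n + 2)) * x" "Upol q x (Suc n)"] by linarith
  qed
  have "degree ([:0, 1:] * Upol q x n) \<le> Suc (n div 2)"
  proof -
    have "[:0, 1:] * Upol q x n = pCons 0 (Upol q x n)" by simp
    thus ?thesis using 3(2) degree_pCons_le[of 0 "Upol q x n"] by simp
  qed
  hence b: "degree (smult (q ^ (n + 1)) ([:0, 1:] * Upol q x n)) \<le> Suc (Suc n) div 2"
    using degree_smult_le[of "q ^ (n + 1)" "[:0, 1:] * Upol q x n"] by simp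
  show ?case by (simp only: Upol.simps) (rule degree_add_le[OF a b])
qed auto

lemma Upol_lead: "q \<noteq> 0 \<Longrightarrow> coeff (Upol q 1 (2 * n)) n \<noteq> 0"
proof (induction n)
  case (Suc n)
  have e: "2 * Suc n = Suc (Suc (2 * n))" by simp
  have "coeff (Upol q 1 (Suc (2 * n))) (Suc n) = 0"
    using Upol_deg[of q 1 "Suc (2*n)"] by (intro coeff_eq_0) auto
  thus ?case using Suc by (simp add: e)
qed simp



function mu :: "real \<Rightarrow> nat \<Rightarrow> real" where
  "mu q n = (if n = 0 then 1 else
     - (\<Sum>i<n. coeff (Upol q 1 (2*n)) i * mu q i) / coeff (Upol q 1 (2*n)) n)"
  by auto
termination by (relation "measure (\<lambda>(q,n). n)") auto

declare mu.simps[simp del]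

definition Lf :: "real \<Rightarrow> real poly \<Rightarrow> real" where
  "Lf q p = (\<Sum>i\<le>degree p. coeff p i * mu q i)"

lemma Lf_ext: "degree p \<le> N \<Longrightarrow> Lf q p = (\<Sum>i\<le>N. coeff p i * mu q i)"
  unfolding Lf_def
  by (rule sum.mono_neutral_left) (auto simp: coeff_eq_0)

lemma Lf_add: "Lf q (p + r) = Lf q p + Lf q r"
proof -
  define N where "N = max (degree p) (degree r)"
  have "degree (p + r) \<le> N" unfolding N_def by (rule degree_add_le) auto
  hence "Lf q (p + r) = (\<Sum>i\<le>N. coeff (p + r) i * mu q i)" by (rule Lf_ext)
  also have "\<dots> = (\<Sum>i\<le>N. coeff p i * mu q i) + (\<Sum>i\<le>N. coeff r i * mu q i)"
    by (simp add: algebra_simps sum.distrib)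
  also have "\<dots> = Lf q p + Lf q r"
    using Lf_ext[of p N q] Lf_ext[of r N q] by (simp add: N_def)
  finally show ?thesis .
qed

lemma Lf_smult: "Lf q (smult c p) = c * Lf q p"
proof -
  have "Lf q (smult c p) = (\<Sum>i\<le>degree p. coeff (smult c p) i * mu q i)"
    by (rule Lf_ext) (rule degree_smult_le)
  thus ?thesis by (simp add: Lf_def sum_distrib_left mult.assoc)
qed

lemma Lf_U: assumes "q \<noteq> 0" shows "Lf q (Upol q 1 (2 * n)) = (if n = 0 then 1 else 0)"
proof (cases "n = 0")
  case True
  then show ?thesis by (simp add: Lf_def mu.simps)
next
  case False
  have "Lf q (Upol q 1 (2 * n)) = (\<Sum>i\<le>n. coeff (Upol q 1 (2 * n)) i * mu q i)"
    by (rule Lf_ext) (use Upol_deg[of q 1 "2*n"] in simp)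
  also have "\<dots> = (\<Sum>i<n. coeff (Upol q 1 (2 * n)) i * mu q i) + coeff (Upol q 1 (2 * n)) n * mu q n"
    by (simp add: lessThan_Suc_atMost[symmetric])
  also have "\<dots> = 0"
    using False Upol_lead[OF assms, of n] by (subst (2) mu.simps) (simp add: field_simps)
  finally show ?thesis using False by simp
qed

lemma qlambda_props:
  assumes "q \<noteq> 0"
  shows "(\<forall>p r. qlambda q (p + r) = qlambda q p + qlambda q r) \<and> (\<forall>c p. qlambda q (smult c p) = c * qlambda q p)
                 \<and> (\<forall>n. qlambda q (Upol q 1 (2 * n)) = (if n = 0 then 1 else 0))"
proof -
  have ex: "\<exists>L. (\<forall>p r. L (p + r) = L p + L r) \<and> (\<forall>c p. L (smult c p) = c * L p)
                 \<and> (\<forall>n. L (Upol q 1 (2 * n)) = (if n = 0 then 1 else 0))"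
    by (rule exI[of _ "Lf q"]) (use Lf_add Lf_smult Lf_U[OF assms] in blast)
  show ?thesis unfolding qlambda_def by (rule someI_ex[OF ex])
qed



lemma peval: "(\<And>x. poly p x = poly r x) \<Longrightarrow> p = (r :: real poly)"
  using poly_eq_poly_eq_iff by blast

lemma Upol_SS: "poly (Upol q 1 (Suc (Suc j))) x =
   (1 + q ^ (j + 2)) * poly (Upol q 1 (Suc j)) x + q ^ (j + 1) * x * poly (Upol q 1 j) x"
  by simp

lemma Upol_1: "poly (Upol q 1 (Suc 0)) x = 1 + q" by simp
lemma Upol_0: "Upol q 1 0 = 1" by simp

definition Pe :: "real \<Rightarrow> nat \<Rightarrow> nat \<Rightarrow> real poly" where
  "Pe q n k = smult ((-1)^n) ([:0,1:]^(n+1-k) * Upol q 1 (2*k-2))"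
definition Po :: "real \<Rightarrow> nat \<Rightarrow> nat \<Rightarrow> real poly" where
  "Po q n k = smult ((-1)^n) ([:0,1:]^(n+1-k) * Upol q 1 (2*k-1))"

context
  fixes q :: real
  assumes hq: "q \<noteq> 0"
begin

lemma lam_add: "qlambda q (p + r) = qlambda q p + qlambda q r"
  using qlambda_props[OF hq] by blast
lemma lam_smult: "qlambda q (smult c p) = c * qlambda q p"
  using qlambda_props[OF hq] by blast
lemma lam_U: "qlambda q (Upol q 1 (2 * n)) = (if n = 0 then 1 else 0)"
  using qlambda_props[OF hq] by blast

lemma lam_lin2: "qlambda q (smult a p + smult c r) = a * qlambda q p + c * qlambda q r"
  by (simp add: lam_add lam_smult)

lemma O1: "Po q n 1 = smult (1 + q) (Pe q n 1)"
  by (rule peval) (simp add: Pe_def Po_def)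

lemma O2: assumes "Suc j \<le> n" shows
  "Po q n (Suc (Suc j)) = smult (q ^ (2 * Suc (Suc j) - 2)) (Po q n (Suc j)) + smult (1 + q ^ (2 * Suc (Suc j) - 1)) (Pe q n (Suc (Suc j)))"
proof -
  obtain m where m: "n = Suc j + m" using assms le_Suc_ex by blast
  have a: "2 * Suc (Suc j) - 1 = Suc (Suc (Suc (2 * j)))" "2 * Suc (Suc j) - 2 = Suc (Suc (2 * j))"
     "2 * Suc j - 1 = Suc (2*j)" "2 * Suc (Suc j) - 2 = Suc (Suc (2*j))"
    "n + 1 - Suc j = Suc m" "n + 1 - Suc (Suc j) = m" using m by auto
  show ?thesis
    by (rule peval) (simp only: Pe_def Po_def a poly_smult poly_mult poly_power Upol_SS, simp add: algebra_simps)
qed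

lemma E2: assumes "j \<le> n" shows
  "smult (q ^ (2 * Suc j - 1)) (Pe q (Suc n) (Suc j)) = Pe q (Suc n) (Suc (Suc j)) + smult (1 + q ^ (2 * Suc j)) (Po q n (Suc j))"
proof -
  obtain m where m: "n = j + m" using assms le_Suc_ex by blast
  have a: "2 * Suc j - 1 = Suc (2 * j)" "2 * Suc j - 2 = 2 * j" "2 * Suc (Suc j) - 2 = Suc (Suc (2*j))"
    "Suc n + 1 - Suc j = Suc m" "Suc n + 1 - Suc (Suc j) = m" "n + 1 - Suc j = m" using m by auto
  show ?thesis
    by (rule peval) (simp only: Pe_def Po_def a poly_smult poly_mult poly_power poly_add Upol_SS, simp add: algebra_simps)
qed

end


lemma powi_cancel: assumes "q \<noteq> (0::real)" "k \<ge> 1"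
  shows "q powi (1 - 2 * int k) * q ^ (2 * k - 1) = 1"
proof -
  have "1 - 2 * int k = - int (2 * k - 1)" using assms(2) by simp
  hence "q powi (1 - 2 * int k) = inverse (q ^ (2 * k - 1))"
    by (simp only: power_int_minus power_int_of_nat)
  thus ?thesis using assms(1) by (simp only: inverse_eq_divide) (simp add: field_simps)
qed

lemma partI:
  fixes q :: real and b :: "nat \<Rightarrow> nat \<Rightarrow> real"
  assumes hq0: "q \<noteq> 0"
    and b01: "b 0 1 = 1"
    and bodd0: "\<forall>n. b (2 * n + 1) 0 = 0"
    and beven_top: "\<forall>n\<ge>1. b (2 * n) (n + 1) = 0"
    and bodd: "\<forall>n k. 1 \<le> k \<and> k \<le> n + 1 \<longrightarrow>
        b (2 * n + 1) k = q ^ (2 * k - 2) * b (2 * n + 1) (k - 1) + (1 + q ^ (2 * k - 1)) * b (2 * n) k"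
    and beven: "\<forall>n k. n \<ge> 1 \<and> 1 \<le> k \<and> k \<le> n \<longrightarrow>
        b (2 * n) k = q powi (1 - 2 * int k) * (b (2 * n) (k + 1) + (1 + q ^ (2 * k)) * b (2 * n - 1) k)"
  shows "(\<forall>k. 1 \<le> k \<and> k \<le> n+1 \<longrightarrow> b (2*n) k = qlambda q (Pe q n k)) \<and>
         (\<forall>k. 1 \<le> k \<and> k \<le> n+1 \<longrightarrow> b (2*n+1) k = qlambda q (Po q n k))"
proof (induction n)
  have oddstep: "\<forall>k. 1 \<le> k \<and> k \<le> n+1 \<longrightarrow> b (2*n+1) k = qlambda q (Po q n k)"
    if ev: "\<forall>k. 1 \<le> k \<and> k \<le> n+1 \<longrightarrow> b (2*n) k = qlambda q (Pe q n k)" for n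
  proof -
    have "j \<le> n \<Longrightarrow> b (2*n+1) (Suc j) = qlambda q (Po q n (Suc j))" for j
    proof (induction j)
      case 0
      have "b (2*n+1) 1 = q ^ 0 * b (2 * n + 1) 0 + (1 + q ^ 1) * b (2 * n) 1"
        using bodd[rule_format, of 1 n] by simp
      also have "\<dots> = (1 + q) * qlambda q (Pe q n 1)" using bodd0 ev by simp
      also have "\<dots> = qlambda q (Po q n 1)" using O1[OF hq0, of n] lam_smult[OF hq0, of "1+q" "Pe q n 1"] by simp
      finally show ?case by simp
    next
      case (Suc j)
      have "b (2*n+1) (Suc (Suc j)) = q ^ (2 * Suc (Suc j) - 2) * b (2 * n + 1) (Suc j)
              + (1 + q ^ (2 * Suc (Suc j) - 1)) * b (2 * n) (Suc (Suc j))"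
        using bodd[rule_format, of "Suc (Suc j)" n] Suc.prems by simp
      also have "\<dots> = q ^ (2 * Suc (Suc j) - 2) * qlambda q (Po q n (Suc j))
              + (1 + q ^ (2 * Suc (Suc j) - 1)) * qlambda q (Pe q n (Suc (Suc j)))"
        using Suc ev by simp
      also have "\<dots> = qlambda q (Po q n (Suc (Suc j)))"
        by (simp only: O2[OF hq0 Suc.prems] lam_lin2[OF hq0])
      finally show ?case .
    qed
    note hh = this
    show ?thesis
    proof (intro allI impI)
      fix k assume k: "1 \<le> k \<and> k \<le> n + 1"
      then obtain j where "k = Suc j" by (cases k) auto
      thus "b (2*n+1) k = qlambda q (Po q n k)" using hh k by simp
    qed
  qed
  {
    case 0
    have "b 0 1 = qlambda q (Pe q 0 1)"
    proof -
      have "Pe q 0 1 = Upol q 1 (2*0)" by (simp add: Pe_def)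
      thus ?thesis using b01 lam_U[OF hq0, of 0] by simp
    qed
    hence ev0: "\<forall>k. 1 \<le> k \<and> k \<le> 0+1 \<longrightarrow> b (2*0) k = qlambda q (Pe q 0 k)"
    proof (intro allI impI)
      fix k :: nat assume "1 \<le> k \<and> k \<le> 0 + 1"
      hence "k = 1" by simp
      thus "b (2*0) k = qlambda q (Pe q 0 k)" using \<open>b 0 1 = qlambda q (Pe q 0 1)\<close> by simp
    qed
    show ?case using ev0 oddstep[OF ev0] by blast
  next
    case (Suc n)
    have od: "\<forall>k. 1 \<le> k \<and> k \<le> n+1 \<longrightarrow> b (2*n+1) k = qlambda q (Po q n k)" using Suc by blast
    have top: "b (2 * Suc n) (n + 2) = qlambda q (Pe q (Suc n) (n + 2))"
    proof -
      have b0: "b (2 * Suc n) (Suc n + 1) = 0" using beven_top[rule_format, of "Suc n"] by simp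
      have pe: "Pe q (Suc n) (n + 2) = smult ((-1) ^ Suc n) (Upol q 1 (2 * Suc n))"
        by (simp add: Pe_def del: Upol.simps)
      have "qlambda q (Pe q (Suc n) (n + 2)) = (-1) ^ Suc n * qlambda q (Upol q 1 (2 * Suc n))"
        by (simp only: pe lam_smult[OF hq0])
      also have "\<dots> = 0" using lam_U[OF hq0, of "Suc n"] by simp
      finally show ?thesis using b0 by simp
    qed
    have ev: "\<forall>k. 1 \<le> k \<and> k \<le> Suc n+1 \<longrightarrow> b (2*Suc n) k = qlambda q (Pe q (Suc n) k)"
    proof (intro allI impI)
      fix k assume k: "1 \<le> k \<and> k \<le> Suc n + 1"
      show "b (2*Suc n) k = qlambda q (Pe q (Suc n) k)"
      proof (rule inc_induct[of k "n+2"])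
        show "k \<le> n + 2" using k by simp
        show "b (2 * Suc n) (n + 2) = qlambda q (Pe q (Suc n) (n + 2))" by (rule top)
      next
        fix i assume i: "k \<le> i" "i < n + 2" and IH: "b (2 * Suc n) (Suc i) = qlambda q (Pe q (Suc n) (Suc i))"
        obtain j where j: "i = Suc j" using i k by (cases i) auto
        have jn: "j \<le> n" using i j by simp
        have "b (2 * Suc n) i = q powi (1 - 2 * int i) * (b (2 * Suc n) (i + 1) + (1 + q ^ (2 * i)) * b (2 * Suc n - 1) i)"
          using beven[rule_format, of "Suc n" i] i k by simp
        also have "\<dots> = q powi (1 - 2 * int i) * (qlambda q (Pe q (Suc n) (Suc i)) + (1 + q ^ (2 * i)) * qlambda q (Po q n i))"
          using IH od i k by simp
        also have "\<dots> = q powi (1 - 2 * int i) * qlambda q (Pe q (Suc n) (Suc i) + smult (1 + q ^ (2 * i)) (Po q n i))"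
          by (simp add: lam_add[OF hq0] lam_smult[OF hq0])
        also have "\<dots> = q powi (1 - 2 * int i) * (q ^ (2 * i - 1) * qlambda q (Pe q (Suc n) i))"
          unfolding j by (simp only: E2[OF hq0 jn, symmetric] lam_smult[OF hq0])
        also have "\<dots> = qlambda q (Pe q (Suc n) i)"
          using powi_cancel[OF hq0, of i] i k by (simp add: mult.assoc[symmetric])
        finally show "b (2 * Suc n) i = qlambda q (Pe q (Suc n) i)" .
      qed
    qed
    show ?case using ev oddstep[OF ev] by blast
  }
qed



definition qD :: "real \<Rightarrow> real fps \<Rightarrow> real fps" where
  "qD q p = Abs_fps (\<lambda>n. qint q (Suc n) * p $ Suc n)"
definition qS :: "real \<Rightarrow> real fps \<Rightarrow> real fps" where
  "qS q p = Abs_fps (\<lambda>n. q ^ n * p $ n)"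

lemma qS_mult: "qS q (a * b) = qS q a * qS q b"
proof (rule fps_ext)
  fix n
  have "qS q (a * b) $ n = (\<Sum>i=0..n. q ^ n * (a $ i * b $ (n - i)))"
    by (simp add: qS_def fps_mult_nth sum_distrib_left)
  also have "\<dots> = (\<Sum>i=0..n. (q ^ i * a $ i) * (q ^ (n - i) * b $ (n - i)))"
  proof (rule sum.cong)
    fix i assume "i \<in> {0..n}"
    hence "q ^ n = q ^ i * q ^ (n - i)" by (simp add: power_add[symmetric])
    thus "q ^ n * (a $ i * b $ (n - i)) = (q ^ i * a $ i) * (q ^ (n - i) * b $ (n - i))" by simp
  qed simp
  also have "\<dots> = (qS q a * qS q b) $ n" by (simp add: qS_def fps_mult_nth)
  finally show "qS q (a * b) $ n = (qS q a * qS q b) $ n" .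
qed

lemma qS_add: "qS q (a + b) = qS q a + qS q b"
  by (rule fps_ext) (simp add: qS_def algebra_simps)
lemma qD_add: "qD q (a + b) = qD q a + qD q b"
  by (rule fps_ext) (simp add: qD_def algebra_simps)
lemma qS_diff: "qS q (a - b) = qS q a - qS q b"
  by (rule fps_ext) (simp add: qS_def algebra_simps)
lemma qD_diff: "qD q (a - b) = qD q a - qD q b"
  by (rule fps_ext) (simp add: qD_def algebra_simps)
lemma qS_const: "qS q (fps_const c * a) = fps_const c * qS q a"
  by (rule fps_ext) (simp add: qS_def algebra_simps)
lemma qD_const: "qD q (fps_const c * a) = fps_const c * qD q a"
  by (rule fps_ext) (simp add: qD_def algebra_simps)

lemma qS_sub: "qS q p = p + fps_const (q - 1) * (fps_X * qD q p)"
proof (rule fps_ext)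
  fix n
  show "qS q p $ n = (p + fps_const (q - 1) * (fps_X * qD q p)) $ n"
  proof (cases n)
    case 0 then show ?thesis by (simp add: qS_def)
  next
    case (Suc m)
    have "q ^ n = 1 + (q - 1) * qint q n" using qint_geo[of q n] by simp
    moreover have "(p + fps_const (q - 1) * (fps_X * qD q p)) $ n = (1 + (q-1)*qint q n) * p$n"
      using Suc by (simp add: qD_def algebra_simps)
    ultimately show ?thesis by (simp add: qS_def)
  qed
qed

lemma qD_qS: "qD q (qS q p) = fps_const q * qS q (qD q p)"
  by (rule fps_ext) (simp add: qS_def qD_def algebra_simps)

lemma qD_mult: "qD q (a * b) = qS q a * qD q b + qD q a * b"
proof (cases "q = 1")
  case True
  have d: "qD 1 p = fps_deriv p" for p
    by (rule fps_ext) (simp add: qD_def qint_def)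
  have s: "qS 1 p = p" for p
    by (rule fps_ext) (simp add: qS_def)
  show ?thesis using True by (simp add: d s)
next
  case False
  define c where "c = fps_const (q - 1) * (fps_X :: real fps)"
  have cnz: "c \<noteq> 0"
  proof
    assume "c = 0"
    hence "c $ 1 = 0" by simp
    thus False using False by (simp add: c_def)
  qed
  have e: "qS q p = p + c * qD q p" for p using qS_sub[of q p] by (simp add: c_def mult.assoc)
  have "c * qD q (a * b) = qS q (a * b) - a * b" using e[of "a*b"] by simp
  also have "\<dots> = (a + c * qD q a) * (b + c * qD q b) - a * b" by (simp add: qS_mult e)
  also have "\<dots> = c * ((a + c * qD q a) * qD q b + qD q a * b)" by (simp add: algebra_simps)
  also have "\<dots> = c * (qS q a * qD q b + qD q a * b)" by (simp add: e)
  finally show ?thesis using cnz by simp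
qed

lemma qexp_0: "qexp q $ 0 = 1" by (simp add: qexp_def qfact_def)

lemma qD_qexp: assumes "q \<noteq> -1" shows "qD q (qexp q) = qexp q"
  by (rule fps_ext) (use qint_nz[OF assms] qfact_nz[OF assms] in \<open>simp add: qD_def qexp_def qfact_Suc field_simps\<close>)



definition upoly :: "real \<Rightarrow> nat \<Rightarrow> real poly" where
  "upoly q n = (case n of 0 \<Rightarrow> 0 | Suc m \<Rightarrow> Upol q 1 m)"

lemma u_rec: "poly (upoly q (Suc (Suc n))) s = (1 + q ^ Suc n) * poly (upoly q (Suc n)) s + q ^ n * s * poly (upoly q n) s"
  by (cases n) (simp_all add: upoly_def algebra_simps)

definition Aser :: "real \<Rightarrow> real \<Rightarrow> real fps" where
  "Aser q s = Abs_fps (\<lambda>n. (-1)^n * poly (upoly q n) s / qfact q n)"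

lemma A_eq: assumes hq1: "q \<noteq> -1"
  shows "qD q (qD q (Aser q s)) = - qD q (Aser q s) - fps_const q * qS q (qD q (Aser q s)) + fps_const s * qS q (Aser q s)"
proof (rule fps_ext)
  fix n
  define u0 u1 u2 where "u0 = poly (upoly q n) s" and "u1 = poly (upoly q (Suc n)) s" and "u2 = poly (upoly q (Suc (Suc n))) s"
  define F a b where "F = qfact q n" and "a = qint q (Suc n)" and "b = qint q (Suc (Suc n))"
  have nz: "F \<noteq> 0" "a \<noteq> 0" "b \<noteq> 0" unfolding F_def a_def b_def
    using qfact_nz[OF hq1] qint_nz[OF hq1] by auto
  have r: "u2 = (1 + q ^ Suc n) * u1 + q ^ n * s * u0" unfolding u0_def u1_def u2_def by (rule u_rec)
  have l: "qD q (qD q (Aser q s)) $ n = a * (b * ((-1)^n * u2 / (F * a * b)))"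
    by (simp add: qD_def Aser_def u2_def F_def a_def b_def qfact_Suc)
  have rr: "(- qD q (Aser q s) - fps_const q * qS q (qD q (Aser q s)) + fps_const s * qS q (Aser q s)) $ n
      = - (a * ((-1)^Suc n * u1 / (F * a))) - q * (q ^ n * (a * ((-1)^Suc n * u1 / (F * a)))) + s * (q ^ n * ((-1)^n * u0 / F))"
    by (simp add: qD_def qS_def Aser_def u0_def u1_def F_def a_def qfact_Suc)
  show "qD q (qD q (Aser q s)) $ n = (- qD q (Aser q s) - fps_const q * qS q (qD q (Aser q s)) + fps_const s * qS q (Aser q s)) $ n"
    unfolding l rr r using nz by (simp add: field_simps)
qed



lemma G_eq: assumes hq1: "q \<noteq> -1"
  shows "qD q (qD q (Aser q s * qexp q)) = Aser q s * qexp q + fps_const s * qS q (Aser q s * qexp q)"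
proof -
  define A e c Q S where "A = Aser q s" and "e = qexp q" and "c = fps_const (q - 1) * (fps_X :: real fps)"
    and "Q = fps_const q" and "S = fps_const s"
  have De: "qD q e = e" unfolding e_def by (rule qD_qexp[OF hq1])
  have SP: "qS q p = p + c * qD q p" for p using qS_sub[of q p] by (simp add: c_def mult.assoc)
  have Se: "qS q e = e + c * e" using SP[of e] De by simp
  have h1: "qD q (A * e) = (qS q A + qD q A) * e" unfolding qD_mult[of q A e] De by (simp add: algebra_simps)
  have h2: "qD q (qD q (A * e)) = (qS q (qS q A) + qS q (qD q A) + Q * qS q (qD q A) + qD q (qD q A)) * e"
    unfolding h1 qD_mult[of q "qS q A + qD q A" e] De qS_add qD_add qD_qS Q_def by (simp add: algebra_simps)
  have E1: "qS q (qS q A) = qS q A + c * (Q * qS q (qD q A))" using SP[of "qS q A"] qD_qS[of q A] by (simp add: Q_def)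
  have E2: "qS q A = A + c * qD q A" by (rule SP)
  have E3: "qS q (qD q A) = qD q A + c * qD q (qD q A)" by (rule SP)
  have E4: "qD q (qD q A) = - qD q A - Q * qS q (qD q A) + S * qS q A"
    unfolding A_def Q_def S_def by (rule A_eq[OF hq1])
  have K: "qS q (qS q A) + qS q (qD q A) + Q * qS q (qD q A) + qD q (qD q A) = A + S * qS q A + S * c * qS q A"
    using E1 E2 E3 E4 by algebra
  have "qD q (qD q (A * e)) = A * e + S * qS q (A * e)"
    unfolding h2 K qS_mult Se by (simp add: algebra_simps)
  thus ?thesis by (simp add: A_def e_def S_def)
qed

lemma G_even: assumes hq1: "q \<noteq> -1"
  shows "(Aser q s * qexp q) $ (2 * m) = 0"
proof (induction m)
  case 0
  show ?case by (simp add: Aser_def upoly_def qexp_def fps_mult_nth)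
next
  case (Suc m)
  define G where "G = Aser q s * qexp q"
  have "(qD q (qD q G)) $ (2*m) = (G + fps_const s * qS q G) $ (2*m)"
    unfolding G_def using G_eq[OF hq1] by simp
  hence "qint q (Suc (2*m)) * (qint q (Suc (Suc (2*m))) * G $ Suc (Suc (2*m))) = G $ (2*m) + s * (q ^ (2*m) * G $ (2*m))"
    by (simp add: qD_def qS_def)
  hence "qint q (Suc (2*m)) * (qint q (Suc (Suc (2*m))) * G $ Suc (Suc (2*m))) = 0"
    using Suc by (simp add: G_def)
  hence "G $ Suc (Suc (2*m)) = 0" using qint_nz[OF hq1] by simp
  thus ?case by (simp add: G_def)
qed

lemma Qpol_zero: assumes hq1: "q \<noteq> -1"
  shows "(\<Sum>i=0..2*m. smult ((-1)^i / (qfact q i * qfact q (2*m - i))) (upoly q i)) = 0"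
proof -
  have "poly (\<Sum>i=0..2*m. smult ((-1)^i / (qfact q i * qfact q (2*m - i))) (upoly q i)) s = 0" for s
  proof -
    have "poly (\<Sum>i=0..2*m. smult ((-1)^i / (qfact q i * qfact q (2*m - i))) (upoly q i)) s
        = (Aser q s * qexp q) $ (2 * m)"
      by (simp add: poly_sum fps_mult_nth Aser_def qexp_def)
    thus ?thesis using G_even[OF hq1] by simp
  qed
  thus ?thesis using poly_all_0_iff_0 by blast
qed



lemma sum2: "(\<Sum>i<2*(n::nat). g i) = (\<Sum>k<n. g (2*k)) + (\<Sum>k<n. g (2*k+1))"
  by (induction n) (simp_all add: algebra_simps)

lemma uniq:
  fixes c d r :: "nat \<Rightarrow> real" and w :: "nat \<Rightarrow> nat \<Rightarrow> real"
  assumes "\<And>m. m \<ge> 1 \<Longrightarrow> (\<Sum>k<m. c (Suc k) * w m (Suc k)) = r m"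
    and "\<And>m. m \<ge> 1 \<Longrightarrow> (\<Sum>k<m. d (Suc k) * w m (Suc k)) = r m"
    and "\<And>m. w m m = 1"
  shows "c (Suc m) = d (Suc m)"
proof (induction m rule: less_induct)
  case (less m)
  have "(\<Sum>k<m. c (Suc k) * w (Suc m) (Suc k)) = (\<Sum>k<m. d (Suc k) * w (Suc m) (Suc k))"
    using less by (intro sum.cong) auto
  moreover have "(\<Sum>k<Suc m. c (Suc k) * w (Suc m) (Suc k)) = (\<Sum>k<Suc m. d (Suc k) * w (Suc m) (Suc k))"
    using assms(1)[of "Suc m"] assms(2)[of "Suc m"] by simp
  ultimately show ?case using assms(3)[of "Suc m"] by simp
qed

context
  fixes q :: real
  assumes hq: "q \<noteq> 0" and hq1: "q \<noteq> -1"
begin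

lemma lam_0: "qlambda q 0 = 0"
  using lam_add[OF hq, of 0 0] by simp

lemma lam_sum: "finite I \<Longrightarrow> qlambda q (\<Sum>i\<in>I. f i) = (\<Sum>i\<in>I. qlambda q (f i))"
  by (induction I rule: finite_induct) (simp_all add: lam_0 lam_add[OF hq])

lemma lam_rel: assumes m: "m \<ge> 1"
  shows "(\<Sum>k<m. (qlambda q (Upol q 1 (2 * Suc k - 1)) / qfact q (2 * Suc k)) * (1 / qfact q (2*m - 2 * Suc k)))
     = 1 / qfact q (2*m - 1)"
proof -
  define h where "h i = (-1)^i / (qfact q i * qfact q (2*m - i)) * qlambda q (upoly q i)" for i
  have "0 = qlambda q (\<Sum>i=0..2*m. smult ((-1)^i / (qfact q i * qfact q (2*m - i))) (upoly q i))"
    using Qpol_zero[OF hq1, of m] lam_0 by simp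
  also have "\<dots> = (\<Sum>i=0..2*m. h i)"
    by (simp add: lam_sum lam_smult[OF hq] h_def)
  also have "\<dots> = (\<Sum>i<Suc (2*m). h i)"
    by (simp add: atLeast0AtMost lessThan_Suc_atMost)
  also have "\<dots> = (\<Sum>k<m. h (2*k)) + (\<Sum>k<m. h (2*k+1)) + h (2*m)"
    by (simp add: sum2)
  also have "\<dots> = (\<Sum>k<Suc m. h (2*k)) + (\<Sum>k<m. h (2*k+1))" by simp
  also have "(\<Sum>k<Suc m. h (2*k)) = h 0 + (\<Sum>k<m. h (2*Suc k))"
    by (subst sum.lessThan_Suc_shift) simp
  also have "h 0 = 0" by (simp add: h_def upoly_def lam_0)
  also have "(\<Sum>k<m. h (2*Suc k)) = (\<Sum>k<m. (qlambda q (Upol q 1 (2 * Suc k - 1)) / qfact q (2 * Suc k)) * (1 / qfact q (2*m - 2 * Suc k)))"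
  proof (rule sum.cong)
    fix k assume "k \<in> {..<m}"
    have "upoly q (2 * Suc k) = Upol q 1 (2 * Suc k - 1)" by (simp add: upoly_def)
    thus "h (2*Suc k) = (qlambda q (Upol q 1 (2 * Suc k - 1)) / qfact q (2 * Suc k)) * (1 / qfact q (2*m - 2 * Suc k))"
      by (simp add: h_def)
  qed simp
  also have "(\<Sum>k<m. h (2*k+1)) = (\<Sum>k<m. if k = 0 then - 1 / qfact q (2*m - 1) else 0)"
  proof (rule sum.cong)
    fix k assume "k \<in> {..<m}"
    have "upoly q (2*k+1) = Upol q 1 (2 * k)" by (simp add: upoly_def)
    thus "h (2*k+1) = (if k = 0 then - 1 / qfact q (2*m - 1) else 0)"
      by (simp add: h_def lam_U[OF hq] qfact_def qint_def)
  qed simp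
  also have "\<dots> = - 1 / qfact q (2*m - 1)" using m by (simp add: sum.delta)
  finally show ?thesis by simp
qed

end



lemma gen_rel:
  fixes q :: real
  assumes hq1: "q \<noteq> -1" and m: "m \<ge> 1"
  shows "(\<Sum>k<m. ((qexp q - qexp_neg q) * inverse (qexp q + qexp_neg q)) $ (2 * Suc k - 1) * (1 / qfact q (2*m - 2 * Suc k)))
     = 1 / qfact q (2*m - 1)"
proof -
  define E Od F where "E = qexp q + qexp_neg q" and "Od = qexp q - qexp_neg q" and "F = Od * inverse E"
  have E0: "E $ 0 = 2" by (simp add: E_def qexp_def qexp_neg_def qfact_def)
  have FE: "F * E = Od" unfolding F_def using inverse_mult_eq_1[of E] E0 by (simp add: mult.assoc)
  have Ej: "E $ j = (1 + (-1)^j) / qfact q j" for j by (simp add: E_def qexp_def qexp_neg_def add_divide_distrib)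
  define g where "g i = F $ i * E $ (2*m - 1 - i)" for i
  have "2 / qfact q (2*m - 1) = Od $ (2*m - 1)"
    using m by (simp add: Od_def qexp_def qexp_neg_def diff_divide_distrib)
  also have "\<dots> = (\<Sum>i=0..2*m-1. g i)" unfolding FE[symmetric] g_def by (simp add: fps_mult_nth)
  also have "\<dots> = (\<Sum>i<2*m. g i)"
  proof -
    have "{0..2*m-1} = {..<2*m}" using m by auto
    thus ?thesis by simp
  qed
  also have "\<dots> = (\<Sum>k<m. g (2*k)) + (\<Sum>k<m. g (2*k+1))" by (rule sum2)
  also have "(\<Sum>k<m. g (2*k)) = 0"
  proof (rule sum.neutral, intro ballI)
    fix k assume k: "k \<in> {..<m}"
    have "2*m - 1 - 2*k = 2*(m-k-1) + 1" using k by auto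
    hence "odd (2*m - 1 - 2*k)" by simp
    thus "g (2*k) = 0" by (simp add: g_def Ej)
  qed
  also have "(\<Sum>k<m. g (2*k+1)) = (\<Sum>k<m. F $ (2 * Suc k - 1) * (2 / qfact q (2*m - 2 * Suc k)))"
  proof (rule sum.cong)
    fix k assume k: "k \<in> {..<m}"
    have a: "2*m - 1 - (2*k+1) = 2*m - 2 * Suc k" "2 * Suc k - 1 = 2*k+1" using k by auto
    have "even (2*m - 2 * Suc k)" by simp
    thus "g (2*k+1) = F $ (2 * Suc k - 1) * (2 / qfact q (2*m - 2 * Suc k))"
      unfolding g_def a Ej by simp
  qed simp
  finally have "(\<Sum>k<m. F $ (2 * Suc k - 1) * (2 / qfact q (2*m - 2 * Suc k))) = 2 / qfact q (2*m - 1)" by simp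
  hence "2 * (\<Sum>k<m. F $ (2 * Suc k - 1) * (1 / qfact q (2*m - 2 * Suc k))) = 2 * (1 / qfact q (2*m - 1))"
    by (simp add: sum_distrib_left mult.commute mult.left_commute)
  thus ?thesis by (simp add: F_def Od_def E_def)
qed



theorem theorem3p6:
  fixes q :: real and b :: "nat \<Rightarrow> nat \<Rightarrow> real"
  assumes hq0: "q \<noteq> 0" and hq1: "q \<noteq> -1"
    and b01: "b 0 1 = 1"
    and bodd0: "\<forall>n. b (2 * n + 1) 0 = 0"
    and beven_top: "\<forall>n\<ge>1. b (2 * n) (n + 1) = 0"
    and bodd: "\<forall>n k. 1 \<le> k \<and> k \<le> n + 1 \<longrightarrow>
        b (2 * n + 1) k = q ^ (2 * k - 2) * b (2 * n + 1) (k - 1) + (1 + q ^ (2 * k - 1)) * b (2 * n) k"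
    and beven: "\<forall>n k. n \<ge> 1 \<and> 1 \<le> k \<and> k \<le> n \<longrightarrow>
        b (2 * n) k = q powi (1 - 2 * int k) * (b (2 * n) (k + 1) + (1 + q ^ (2 * k)) * b (2 * n - 1) k)"
  shows "\<forall>n\<ge>1. b (2 * n - 1) n = qlambda q (smult ((-1) ^ (n - 1)) (Upol q 1 (2 * n - 1)))
                 \<and> qlambda q (smult ((-1) ^ (n - 1)) (Upol q 1 (2 * n - 1))) = qpoch_neg q (2 * n - 1) * qGenocchi q n"
proof (intro allI impI conjI)
  fix n :: nat assume n: "n \<ge> 1"
  then obtain n' where n': "n = Suc n'" by (cases n) auto
  have I: "b (2 * n' + 1) (Suc n') = qlambda q (Po q n' (Suc n'))"
    using partI[OF hq0 b01 bodd0 beven_top bodd beven, of n'] by simp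
  have "Po q n' (Suc n') = smult ((-1) ^ (n - 1)) (Upol q 1 (2 * n - 1))"
    by (simp add: Po_def n' del: Upol.simps)
  moreover have "2 * n - 1 = 2 * n' + 1" using n' by simp
  ultimately show "b (2 * n - 1) n = qlambda q (smult ((-1) ^ (n - 1)) (Upol q 1 (2 * n - 1)))"
    using I n' by simp
next
  fix n :: nat assume n: "n \<ge> 1"
  define Fs where "Fs = (qexp q - qexp_neg q) * inverse (qexp q + qexp_neg q)"
  define c where "c k = qlambda q (Upol q 1 (2 * k - 1)) / qfact q (2 * k)" for k
  define d where "d k = Fs $ (2 * k - 1)" for k
  define w where "w m k = 1 / qfact q (2*m - 2 * k)" for m k :: nat
  have cd: "c (Suc m) = d (Suc m)" for m
  proof (rule uniq[where w = w and r = "\<lambda>m. 1 / qfact q (2*m - 1)"])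
    show "(\<Sum>k<m. c (Suc k) * w m (Suc k)) = 1 / qfact q (2 * m - 1)" if "m \<ge> 1" for m
      using lam_rel[OF hq0 hq1 that] by (simp add: c_def w_def)
    show "(\<Sum>k<m. d (Suc k) * w m (Suc k)) = 1 / qfact q (2 * m - 1)" if "m \<ge> 1" for m
      using gen_rel[OF hq1 that] by (simp add: d_def w_def Fs_def)
    show "w m m = 1" for m by (simp add: w_def qfact_def)
  qed
  have cdn: "c n = d n" using cd[of "n - 1"] n by simp
  have "qlambda q (smult ((-1) ^ (n - 1)) (Upol q 1 (2 * n - 1))) = (-1) ^ (n - 1) * (c n * qfact q (2 * n))"
    using qfact_nz[OF hq1, of "2*n"] by (simp add: lam_smult[OF hq0] c_def del: Upol.simps)
  also have "\<dots> = (-1) ^ (n - 1) * (Fs $ (2 * n - 1) * qfact q (2 * n))" by (simp add: cdn d_def)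
  also have "\<dots> = qpoch_neg q (2 * n - 1) * qGenocchi q n"
  proof -
    have eqX: "fps_X * (qexp q - qexp_neg q) * inverse (qexp q + qexp_neg q) = fps_X * Fs"
      by (simp add: Fs_def mult.assoc)
    have "(fps_X * Fs) $ (2 * n) = Fs $ (2 * n - 1)" using n by simp
    hence "(fps_X * (qexp q - qexp_neg q) * inverse (qexp q + qexp_neg q)) $ (2 * n) = Fs $ (2 * n - 1)"
      by (simp only: eqX)
    thus ?thesis using qpoch_nz[OF hq1, of "2*n-1"] by (simp add: qGenocchi_def)
  qed
  finally show "qlambda q (smult ((-1) ^ (n - 1)) (Upol q 1 (2 * n - 1))) = qpoch_neg q (2 * n - 1) * qGenocchi q n" .
qed


end
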